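(* Let $\alpha=\frac{r}{s}+k\sqrt{p/q}$ be a positive irrational, where $r\in\mathbb Z$, $p,q,s\in\mathbb N$, $k\in\{-1,1\}$, $s$ odd, $\gcd(r,s)=1$, $\gcd(p,q)=1$. Let $d_1=\gcd(ps^2-qr^2,qs)$ and $N=\frac{pqs^4}{d_1^2}$ (a positive nonsquare integer). (1) If $x^2-Ny^2=-1$ has no integer solution, then for $A\in GL(2,\mathbb Z)$, $\pi(A)$ restricts to an isometric automorphism of $\mathcal A_\alpha$ if and only if $$A=\begin{bmatrix} -\frac{qrs}{d_1}y_1+x_1 & \frac{qs^2}{d_1}y_1\\ \frac{ps^2-qr^2}{d_1}y_1 & \frac{qrs}{d_1}y_1+x_1\end{bmatrix}^n$$ for some $n\in\mathbb Z$, where $(x_1,y_1)$ is the fundamental solution of $x^2-Ny^2=1$. (2) If $x^2-Ny^2=-1$ has an integer solution, then $\pi(A)$ restricts to an isometric automorphism of $\mathcal A_\alpha$ if and only if $$A=\begin{bmatrix} -\frac{qrs}{d_1}ky_1'+x_1' & \frac{qs^2}{d_1}ky_1'\\ \frac{ps^2-qr^2}{d_1}ky_1' & \frac{qrs}{d_1}ky_1'+x_1'\end{bmatrix}^n$$ for some $n\in\mathbb Z$, where $(x_1',y_1')$ is the fundamental solution of $x^2-Ny^2=-1$.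
   Context: For a positive irrational $\alpha$, $\mathcal A_\alpha=\{f\in C(\mathbb T^2): \hat f(m,n)=0 \text{ whenever } m+\alpha n<0\}$ ($\mathbb T$ the unit circle, $\hat f$ the Fourier transform on $\mathbb Z^2$), a uniform algebra with the sup norm. For $A=\begin{bmatrix} a&b\\ c&d\end{bmatrix}\in GL(2,\mathbb Z)$, $\pi(A)(f)=f\circ\varphi$ with $\varphi(z,w)=(z^aw^b,z^cw^d)$. For a positive nonsquare integer $N$ and $e\in\{1,-1\}$, the fundamental solution of $x^2-Ny^2=e$ (when a solution exists) is the solution $(x_1,y_1)$ in positive integers with $x_1$ smallest. *)

theory Defs
  imports "HOL-Analysis.Analysis"
begin

definition torus :: "(complex \<times> complex) set" where
  "torus = {(z, w). norm z = 1 \<and> norm w = 1}"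

definition fourier2 :: "(complex \<times> complex \<Rightarrow> complex) \<Rightarrow> int \<Rightarrow> int \<Rightarrow> complex" where
  "fourier2 f m n =
     integral (cbox (0::real, 0::real) (2*pi, 2*pi))
       (\<lambda>(s, t). f (cis s, cis t) * cis (- (of_int m * s + of_int n * t))) / (4 * pi^2)"

text \<open>The algebra A_alpha (functions are only relevant on the torus).\<close>
definition A_alg :: "real \<Rightarrow> (complex \<times> complex \<Rightarrow> complex) set" where
  "A_alg \<alpha> = {f. continuous_on torus f \<and>
      (\<forall>m n. real_of_int m + \<alpha> * real_of_int n < 0 \<longrightarrow> fourier2 f m n = 0)}"

definition supnorm :: "(complex \<times> complex \<Rightarrow> complex) \<Rightarrow> real" where
  "supnorm f = Sup ((\<lambda>x. norm (f x)) ` torus)"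

definition mat2 :: "int \<Rightarrow> int \<Rightarrow> int \<Rightarrow> int \<Rightarrow> int^2^2" where
  "mat2 a b c d = (\<chi> i j. if i = 1 then (if j = 1 then a else b) else (if j = 1 then c else d))"

definition GL2Z :: "int^2^2 \<Rightarrow> bool" where
  "GL2Z A \<longleftrightarrow> det A = 1 \<or> det A = -1"

fun matpow :: "int^2^2 \<Rightarrow> nat \<Rightarrow> int^2^2" where
  "matpow A 0 = mat 1"
| "matpow A (Suc n) = A ** matpow A n"

text \<open>Inverse of a matrix in GL(2,Z): det A * adj A (det A = +-1).\<close>
definition mat2_inv :: "int^2^2 \<Rightarrow> int^2^2" where
  "mat2_inv A = mat2 (det A * A$2$2) (- det A * A$1$2) (- det A * A$2$1) (det A * A$1$1)"

definition matzpow :: "int^2^2 \<Rightarrow> int \<Rightarrow> int^2^2" where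
  "matzpow A n = (if 0 \<le> n then matpow A (nat n) else matpow (mat2_inv A) (nat (- n)))"

definition phiA :: "int^2^2 \<Rightarrow> complex \<times> complex \<Rightarrow> complex \<times> complex" where
  "phiA A = (\<lambda>(z, w). (z powi (A$1$1) * w powi (A$1$2), z powi (A$2$1) * w powi (A$2$2)))"

definition piA :: "int^2^2 \<Rightarrow> (complex \<times> complex \<Rightarrow> complex) \<Rightarrow> (complex \<times> complex \<Rightarrow> complex)" where
  "piA A f = f \<circ> phiA A"

text \<open>pi(A) restricts to an isometric automorphism of A_alpha: it maps A_alpha into
  A_alpha, onto A_alpha (as functions on the torus), and preserves the sup norm.
  (pi(A) is automatically linear and multiplicative.)\<close>
definition iso_aut :: "real \<Rightarrow> int^2^2 \<Rightarrow> bool" where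
  "iso_aut \<alpha> A \<longleftrightarrow>
     (\<forall>f\<in>A_alg \<alpha>. piA A f \<in> A_alg \<alpha>) \<and>
     (\<forall>g\<in>A_alg \<alpha>. \<exists>f\<in>A_alg \<alpha>. \<forall>x\<in>torus. piA A f x = g x) \<and>
     (\<forall>f\<in>A_alg \<alpha>. supnorm (piA A f) = supnorm f)"

definition fund_sol :: "int \<Rightarrow> int \<Rightarrow> int \<Rightarrow> int \<Rightarrow> bool" where
  "fund_sol N e x y \<longleftrightarrow> x > 0 \<and> y > 0 \<and> x^2 - N * y^2 = e \<and>
     (\<forall>x' y'. x' > 0 \<and> y' > 0 \<and> x'^2 - N * y'^2 = e \<longrightarrow> x \<le> x')"

end

theory Submission
  imports Defs
begin


definition per1 :: "(real \<Rightarrow> complex) \<Rightarrow> bool" where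
  "per1 h \<longleftrightarrow> (\<forall>x. h (x + 2*pi) = h x)"

lemma per1_nat: "per1 h \<Longrightarrow> h (x + 2*pi*real n) = h x"
proof (induction n arbitrary: x)
  case 0 then show ?case by simp
next
  case (Suc n)
  have "h (x + 2*pi*real (Suc n)) = h ((x + 2*pi*real n) + 2*pi)" by (simp add: algebra_simps)
  also have "\<dots> = h (x + 2*pi*real n)" using Suc.prems by (simp add: per1_def)
  finally show ?case using Suc by simp
qed

lemma per1_int: assumes "per1 h" shows "h (x + 2*pi* of_int k) = h x"
proof (cases "k \<ge> 0")
  case True
  then obtain n where "k = int n" using nonneg_int_cases by blast
  then show ?thesis using per1_nat[OF assms] by simp
next
  case False
  then obtain n where n: "k = - int n" by (metis less_le_not_le neg_int_cases nle_le zero_le_imp_eq_int)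
  have "h x = h ((x + 2*pi* of_int k) + 2*pi*real n)" by (simp add: n)
  also have "\<dots> = h (x + 2*pi* of_int k)" using per1_nat[OF assms] by blast
  finally show ?thesis by simp
qed

lemma shift_small:
  assumes c: "continuous_on UNIV h" and p: "per1 h" and "0 \<le> c" "c \<le> 2*pi"
  shows "integral {0..2*pi} (\<lambda>s. h (s + c)) = integral {0..2*pi} h"
proof -
  have "integral {0..2*pi} (\<lambda>s. h (s + c)) = integral {0..2*pi} (h \<circ> (+) c)"
    by (simp add: o_def add.commute)
  also have "\<dots> = integral {c..2*pi+c} h" by (simp add: integral_shift_Icc_real)
  also have "\<dots> = integral {c..2*pi} h + integral {2*pi..2*pi+c} h"
    using Henstock_Kurzweil_Integration.integral_combine[where a=c and c="2*pi" and b="2*pi+c" and f=h] assms integrable_continuous_interval[OF continuous_on_subset[OF c]] by auto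
  also have "integral {2*pi..2*pi+c} h = integral {0..c} (h \<circ> (+) (2*pi))"
    by (simp add: integral_shift_Icc_real add.commute)
  also have "\<dots> = integral {0..c} h"
    using p by (simp add: o_def per1_def add.commute)
  also have "integral {c..2*pi} h + integral {0..c} h = integral {0..2*pi} h"
    using assms by (subst add.commute, intro Henstock_Kurzweil_Integration.integral_combine integrable_continuous_interval continuous_on_subset[OF c]) auto
  finally show ?thesis .
qed

lemma shift1:
  assumes c: "continuous_on UNIV h" and p: "per1 h"
  shows "integral {0..2*pi} (\<lambda>s. h (s + c)) = integral {0..2*pi} h"
proof -
  define k where "k = \<lfloor>c / (2*pi)\<rfloor>"
  define c0 where "c0 = c - 2*pi* of_int k"
  have "of_int k \<le> c / (2*pi)" "c / (2*pi) < of_int k + 1" unfolding k_def by linarith+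
  then have "2*pi* of_int k \<le> c" "c < 2*pi*(of_int k + 1)"
    using pi_gt_zero by (auto simp: field_simps)
  then have c0: "0 \<le> c0" "c0 \<le> 2*pi" unfolding c0_def by (auto simp: algebra_simps)
  have "\<And>s. h (s + c) = h (s + c0)"
    using per1_int[OF p, of "s + c0" k for s] by (simp add: c0_def algebra_simps)
  then show ?thesis using shift_small[OF c p c0] by simp
qed

lemma reflect1:
  assumes c: "continuous_on UNIV h" and p: "per1 h"
  shows "integral {0..2*pi} (\<lambda>s. h (- s)) = integral {0..2*pi} h"
proof -
  have "integral {0..2*pi} (\<lambda>s. h (- s)) = integral {-2*pi..0} h"
    using Henstock_Kurzweil_Integration.integral_reflect_real[of 0 "-2*pi" h] by simp
  also have "\<dots> = integral {0..2*pi} (h \<circ> (+) (-2*pi))"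
    by (simp add: integral_shift_Icc_real)
  also have "\<dots> = integral {0..2*pi} (\<lambda>s. h (s + (-2*pi)))"
    by (simp add: o_def add.commute)
  also have "\<dots> = integral {0..2*pi} h" by (rule shift1[OF c p])
  finally show ?thesis .
qed



lemma mat2_nth [simp]:
  "mat2 a b c d $ 1 $ 1 = a" "mat2 a b c d $ 1 $ 2 = b"
  "mat2 a b c d $ 2 $ 1 = c" "mat2 a b c d $ 2 $ 2 = d"
  by (simp_all add: mat2_def)

lemma mat2_eta: "A = mat2 (A$1$1) (A$1$2) (A$2$1) (A$2$2)"
  by (simp add: vec_eq_iff forall_2)

lemma mat2_eq_iff: "mat2 a b c d = mat2 a' b' c' d' \<longleftrightarrow> a = a' \<and> b = b' \<and> c = c' \<and> d = d'"
  by (metis mat2_nth)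

lemma mat2_mult:
  "mat2 a b c d ** mat2 a' b' c' d' = mat2 (a*a' + b*c') (a*b' + b*d') (c*a' + d*c') (c*b' + d*d')"
  by (simp add: vec_eq_iff forall_2 matrix_matrix_mult_def sum_2)

lemma mat2_one: "mat 1 = mat2 1 0 0 1"
  by (simp add: vec_eq_iff forall_2 mat_def)

lemma det_mat2: "det (mat2 a b c d) = a*d - b*c"
  by (simp add: det_2)

definition Qsq :: "(real \<times> real) set" where "Qsq = cbox (0,0) (2*pi, 2*pi)"

definition per2 :: "(real \<times> real \<Rightarrow> complex) \<Rightarrow> bool" where
  "per2 G \<longleftrightarrow> (\<forall>s t. G (s + 2*pi, t) = G (s, t) \<and> G (s, t + 2*pi) = G (s, t))"

definition lin :: "int^2^2 \<Rightarrow> real \<times> real \<Rightarrow> real \<times> real" where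
  "lin A x = (of_int (A$1$1) * fst x + of_int (A$1$2) * snd x, of_int (A$2$1) * fst x + of_int (A$2$2) * snd x)"

definition INV :: "int^2^2 \<Rightarrow> bool" where
  "INV A \<longleftrightarrow> (\<forall>G. continuous_on UNIV G \<longrightarrow> per2 G \<longrightarrow> integral Qsq (G \<circ> lin A) = integral Qsq G)"

lemma per2_int:
  assumes "per2 G" shows "G (s + 2*pi* of_int k, t + 2*pi* of_int l) = G (s, t)"
proof -
  have p1: "per1 (\<lambda>x. G (x, t'))" for t' using assms by (simp add: per1_def per2_def)
  have p2: "per1 (\<lambda>y. G (s', y))" for s' using assms by (simp add: per1_def per2_def)
  have "G (s + 2*pi* of_int k, t + 2*pi* of_int l) = G (s, t + 2*pi* of_int l)"
    using per1_int[OF p1] by blast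
  also have "\<dots> = G (s, t)" using per1_int[OF p2] by blast
  finally show ?thesis .
qed

lemma lin_mult: "lin (A ** B) x = lin A (lin B x)"
  by (simp add: lin_def matrix_matrix_mult_def sum_2 algebra_simps)

lemma continuous_lin: "continuous_on UNIV (lin A)"
  unfolding lin_def by (intro continuous_intros)

lemma per2_lin: assumes "per2 G" shows "per2 (G \<circ> lin A)"
  unfolding per2_def
proof (intro allI conjI)
  fix s t
  have "G (lin A (s + 2*pi, t)) = G (fst (lin A (s,t)) + 2*pi* of_int (A$1$1), snd (lin A (s,t)) + 2*pi* of_int (A$2$1))"
    by (simp add: lin_def algebra_simps)
  also have "\<dots> = G (lin A (s,t))" using per2_int[OF assms] by simp
  finally show "(G \<circ> lin A) (s + 2 * pi, t) = (G \<circ> lin A) (s, t)" by simp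
  have "G (lin A (s, t + 2*pi)) = G (fst (lin A (s,t)) + 2*pi* of_int (A$1$2), snd (lin A (s,t)) + 2*pi* of_int (A$2$2))"
    by (simp add: lin_def algebra_simps)
  also have "\<dots> = G (lin A (s,t))" using per2_int[OF assms] by simp
  finally show "(G \<circ> lin A) (s, t + 2 * pi) = (G \<circ> lin A) (s, t)" by simp
qed

lemma INV_mult: assumes "INV A" "INV B" shows "INV (A ** B)"
  unfolding INV_def
proof (intro allI impI)
  fix G :: "real \<times> real \<Rightarrow> complex"
  assume c: "continuous_on UNIV G" and p: "per2 G"
  have "G \<circ> lin (A ** B) = (G \<circ> lin A) \<circ> lin B" by (auto simp: lin_mult)
  moreover have "continuous_on UNIV (G \<circ> lin A)"
    using continuous_on_compose[OF continuous_lin continuous_on_subset[OF c]] by auto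
  ultimately have "integral Qsq (G \<circ> lin (A ** B)) = integral Qsq (G \<circ> lin A)"
    using assms(2) per2_lin[OF p] unfolding INV_def by metis
  also have "\<dots> = integral Qsq G" using assms(1) c p unfolding INV_def by blast
  finally show "integral Qsq (G \<circ> lin (A ** B)) = integral Qsq G" .
qed

lemma INV_one: "INV (mat 1)"
  unfolding INV_def by (simp add: lin_def mat_def o_def)

lemma fub1:
  fixes G :: "real \<times> real \<Rightarrow> complex"
  assumes "continuous_on UNIV G"
  shows "integral Qsq G = integral {0..2*pi} (\<lambda>s. integral {0..2*pi} (\<lambda>t. G (s,t)))"
  unfolding Qsq_def
  using integral_prod_continuous[of 0 0 "2*pi" "2*pi" G] continuous_on_subset[OF assms]
  by simp

lemma fub2:
  fixes G :: "real \<times> real \<Rightarrow> complex"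
  assumes "continuous_on UNIV G"
  shows "integral Qsq G = integral {0..2*pi} (\<lambda>t. integral {0..2*pi} (\<lambda>s. G (s,t)))"
proof -
  have "integral Qsq G = integral (cbox 0 (2*pi)) (\<lambda>s. integral (cbox 0 (2*pi)) (\<lambda>t. G (s,t)))"
    using fub1[OF assms] by simp
  also have "\<dots> = integral (cbox 0 (2*pi)) (\<lambda>t. integral (cbox 0 (2*pi)) (\<lambda>s. G (s,t)))"
    using integral_swap_continuous[where f="\<lambda>s t. G(s,t)" and a=0 and b="2*pi" and c=0 and d="2*pi"] continuous_on_subset[OF assms]
    by (simp add: case_prod_beta')
  finally show ?thesis by simp
qed

lemma cont_slice1: "continuous_on UNIV G \<Longrightarrow> continuous_on UNIV (\<lambda>s. G (s, t))"
  by (rule continuous_on_compose2[of UNIV G]) (auto intro: continuous_intros)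
lemma cont_slice2: "continuous_on UNIV G \<Longrightarrow> continuous_on UNIV (\<lambda>t. G (s, t))"
  by (rule continuous_on_compose2[of UNIV G]) (auto intro: continuous_intros)

lemma INV_shear: "INV (mat2 1 b 0 1)"
  unfolding INV_def
proof (intro allI impI)
  fix G :: "real \<times> real \<Rightarrow> complex"
  assume c: "continuous_on UNIV G" and p: "per2 G"
  have c2: "continuous_on UNIV (G \<circ> lin (mat2 1 b 0 1))"
    using continuous_on_compose[OF continuous_lin continuous_on_subset[OF c]] by auto
  have "integral Qsq (G \<circ> lin (mat2 1 b 0 1)) = integral {0..2*pi} (\<lambda>t. integral {0..2*pi} (\<lambda>s. G (s + of_int b * t,t)))"
    using fub2[OF c2] by (simp add: lin_def)
  also have "\<dots> = integral {0..2*pi} (\<lambda>t. integral {0..2*pi} (\<lambda>s. G (s,t)))"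
  proof (rule integral_cong)
    fix t assume "t \<in> {0..2*pi}"
    show "integral {0..2*pi} (\<lambda>s. G (s + of_int b * t,t)) = integral {0..2*pi} (\<lambda>s. G (s,t))"
      using shift1[OF cont_slice1[OF c], of t "of_int b * t"] p by (simp add: per1_def per2_def)
  qed
  also have "\<dots> = integral Qsq G" using fub2[OF c] by simp
  finally show "integral Qsq (G \<circ> lin (mat2 1 b 0 1)) = integral Qsq G" .
qed

lemma INV_neg: "INV (mat2 (-1) 0 0 1)"
  unfolding INV_def
proof (intro allI impI)
  fix G :: "real \<times> real \<Rightarrow> complex"
  assume c: "continuous_on UNIV G" and p: "per2 G"
  have c2: "continuous_on UNIV (G \<circ> lin (mat2 (-1) 0 0 1))"
    using continuous_on_compose[OF continuous_lin continuous_on_subset[OF c]] by auto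
  have "integral Qsq (G \<circ> lin (mat2 (-1) 0 0 1)) = integral {0..2*pi} (\<lambda>t. integral {0..2*pi} (\<lambda>s. G (- s,t)))"
    using fub2[OF c2] by (simp add: lin_def)
  also have "\<dots> = integral {0..2*pi} (\<lambda>t. integral {0..2*pi} (\<lambda>s. G (s,t)))"
  proof (rule integral_cong)
    fix t assume "t \<in> {0..2*pi}"
    show "integral {0..2*pi} (\<lambda>s. G (- s,t)) = integral {0..2*pi} (\<lambda>s. G (s,t))"
      using reflect1[OF cont_slice1[OF c], of t] p by (simp add: per1_def per2_def)
  qed
  also have "\<dots> = integral Qsq G" using fub2[OF c] by simp
  finally show "integral Qsq (G \<circ> lin (mat2 (-1) 0 0 1)) = integral Qsq G" .
qed

lemma INV_swap: "INV (mat2 0 1 1 0)"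
  unfolding INV_def
proof (intro allI impI)
  fix G :: "real \<times> real \<Rightarrow> complex"
  assume c: "continuous_on UNIV G" and p: "per2 G"
  have c2: "continuous_on UNIV (G \<circ> lin (mat2 0 1 1 0))"
    using continuous_on_compose[OF continuous_lin continuous_on_subset[OF c]] by auto
  have "integral Qsq (G \<circ> lin (mat2 0 1 1 0)) = integral {0..2*pi} (\<lambda>s. integral {0..2*pi} (\<lambda>t. G (t,s)))"
    using fub1[OF c2] by (simp add: lin_def)
  also have "\<dots> = integral Qsq G" using fub2[OF c] by simp
  finally show "integral Qsq (G \<circ> lin (mat2 0 1 1 0)) = integral Qsq G" .
qed

lemma INV_cancel: assumes "INV E'" "INV (E ** A)" "E' ** E = mat 1" shows "INV A"
proof -
  have "E' ** (E ** A) = A" by (simp add: matrix_mul_assoc assms(3) matrix_mul_lid)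
  then show ?thesis using INV_mult[OF assms(1,2)] by simp
qed

lemma INV_diag2: "d = 1 \<or> d = -1 \<Longrightarrow> INV (mat2 1 0 0 d)"
proof -
  assume "d = 1 \<or> d = -1"
  moreover have "INV (mat2 1 0 0 1)" using INV_one by (simp add: mat2_one)
  moreover have "INV (mat2 0 1 1 0 ** mat2 (-1) 0 0 1 ** mat2 0 1 1 0)"
    by (intro INV_mult INV_swap INV_neg)
  ultimately show ?thesis by (auto simp: mat2_mult)
qed

lemma INV_diag1: "a = 1 \<or> a = -1 \<Longrightarrow> INV (mat2 a 0 0 1)"
  using INV_one INV_neg by (auto simp: mat2_one)

lemma INV_upper:
  assumes "a = 1 \<or> a = -1" "d = 1 \<or> d = -1" shows "INV (mat2 a b 0 d)"
proof -
  have "INV (mat2 a 0 0 1 ** mat2 1 (a*b*d) 0 1 ** mat2 1 0 0 d)"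
    using assms by (intro INV_mult INV_diag1 INV_diag2 INV_shear) auto
  moreover have "mat2 a 0 0 1 ** mat2 1 (a*b*d) 0 1 ** mat2 1 0 0 d = mat2 a b 0 d"
    using assms by (auto simp: mat2_mult)
  ultimately show ?thesis by simp
qed

lemma INV_all_aux: "\<forall>A. nat \<bar>A$2$1\<bar> = m \<longrightarrow> (det A = 1 \<or> det A = -1) \<longrightarrow> INV A"
proof (induction m rule: less_induct)
  case (less m)
  show ?case
  proof (intro allI impI)
    fix A :: "int^2^2"
    assume m: "nat \<bar>A$2$1\<bar> = m" and dt: "det A = 1 \<or> det A = -1"
    define a b c d where "a = A$1$1" "b = A$1$2" "c = A$2$1" "d = A$2$2"
    have A: "A = mat2 a b c d" unfolding a_b_c_d_def by (rule mat2_eta)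
    have dt': "a*d - b*c = 1 \<or> a*d - b*c = -1" using dt by (simp add: A det_mat2)
    show "INV A"
    proof (cases "c = 0")
      case True
      then have "a*d = 1 \<or> a*d = -1" using dt' by simp
      then have "(a = 1 \<or> a = -1) \<and> (d = 1 \<or> d = -1)"
        by (metis mult_minus_left pos_zmult_eq_1_iff_lemma zmult_eq_1_iff minus_equation_iff)
      then show ?thesis using INV_upper A True by auto
    next
      case False
      define qq rr where "qq = a div c" "rr = a mod c"
      have arr: "a = qq*c + rr" unfolding qq_rr_def by simp
      have "\<bar>rr\<bar> < \<bar>c\<bar>" unfolding qq_rr_def using False
        by (metis abs_mod_less)
      define B where "B = mat2 0 1 1 0 ** (mat2 1 (-qq) 0 1 ** A)"
      have B: "B = mat2 c d rr (b - qq*d)" unfolding B_def A by (simp add: mat2_mult arr)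
      have "nat \<bar>B$2$1\<bar> < m" using B m \<open>\<bar>rr\<bar> < \<bar>c\<bar>\<close> a_b_c_d_def by auto
      moreover have "det B = 1 \<or> det B = -1" using dt' by (auto simp: B det_mat2 arr algebra_simps)
      ultimately have "INV B" using less by blast
      have "INV (mat2 1 (-qq) 0 1 ** A)"
        using INV_cancel[OF INV_swap \<open>INV B\<close>[unfolded B_def]] by (simp add: mat2_mult mat2_one)
      then show "INV A"
        using INV_cancel[OF INV_shear[of qq]] by (simp add: mat2_mult mat2_one)
    qed
  qed
qed

lemma INV_all: "det A = 1 \<or> det A = -1 \<Longrightarrow> INV A"
  using INV_all_aux by blast



lemma cis_in_torus [simp]: "(cis s, cis t) \<in> torus"
  by (simp add: torus_def)

lemma fourier2_cong:
  assumes "\<And>x. x \<in> torus \<Longrightarrow> f x = g x" shows "fourier2 f m n = fourier2 g m n"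
  unfolding fourier2_def using assms by (simp add: case_prod_beta')

lemma cis_int_integral:
  "integral {0..2*pi} (\<lambda>s. cis (of_int k * s)) = (if k = 0 then 2*pi else 0)"
proof (cases "k = 0")
  case True then show ?thesis by (simp add: scaleR_conv_of_real)
next
  case False
  define F where "F = (\<lambda>s::real. cis (of_int k * s) / (\<i> * of_int k))"
  have d: "(F has_vector_derivative cis (of_int k * x)) (at x within {0..2*pi})" for x
  proof -
    have "((\<lambda>s. cis (of_int k * s)) has_derivative (\<lambda>t. (of_int k * t) *\<^sub>R (\<i> * cis (of_int k * x)))) (at x within {0..2*pi})"
      by (intro has_derivative_cis derivative_eq_intros) auto
    then have "((\<lambda>s. cis (of_int k * s)) has_vector_derivative (of_int k * (\<i> * cis (of_int k * x)))) (at x within {0..2*pi})"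
      by (simp add: has_vector_derivative_def scaleR_conv_of_real algebra_simps)
    then have "((\<lambda>s. cis (of_int k * s) / (\<i> * of_int k)) has_vector_derivative (of_int k * (\<i> * cis (of_int k * x))) / (\<i> * of_int k)) (at x within {0..2*pi})"
      by (rule has_vector_derivative_divide)
    then show ?thesis using False by (simp add: F_def field_simps)
  qed
  have "((\<lambda>s. cis (of_int k * s)) has_integral (F (2*pi) - F 0)) {0..2*pi}"
    by (rule fundamental_theorem_of_calculus) (auto intro: d)
  moreover have "F (2*pi) - F 0 = 0"
  proof -
    have "cis (of_int k * (2*pi)) = 1"
      using cis_multiple_2pi[of "of_int k"] by (simp add: mult.commute mult.left_commute)
    then show ?thesis by (simp add: F_def)
  qed
  ultimately show ?thesis using False by (simp add: integral_unique)
qed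

definition mono :: "int \<Rightarrow> int \<Rightarrow> complex \<times> complex \<Rightarrow> complex" where
  "mono m n = (\<lambda>(z, w). z powi m * w powi n)"

lemma fourier2_mono: "fourier2 (mono m n) j l = (if m = j \<and> n = l then 1 else 0)"
proof -
  have e: "(\<lambda>(s,t). mono m n (cis s, cis t) * cis (- (of_int j * s + of_int l * t)))
      = (\<lambda>x. cis (of_int (m - j) * fst x) * cis (of_int (n - l) * snd x))"
    by (auto simp: mono_def cis_power_int cis_mult algebra_simps)
  have c: "continuous_on UNIV (\<lambda>x::real\<times>real. cis (of_int (m - j) * fst x) * cis (of_int (n - l) * snd x))"
    by (intro continuous_intros)
  have "integral Qsq (\<lambda>x. cis (of_int (m - j) * fst x) * cis (of_int (n - l) * snd x))
      = integral {0..2*pi} (\<lambda>s. cis (of_int (m - j) * s)) * integral {0..2*pi} (\<lambda>t. cis (of_int (n - l) * t))"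
    using fub1[OF c] by simp
  then show ?thesis
    unfolding fourier2_def e Qsq_def[symmetric]
    using cis_int_integral[of "m-j"] cis_int_integral[of "n-l"] by (simp add: power2_eq_square scaleR_conv_of_real)
qed

lemma cis_shift_int: "cis (x + 2*pi* of_int k) = cis x"
proof -
  have "cis (2*pi* of_int k) = 1" using cis_multiple_2pi[of "of_int k"] by simp
  then show ?thesis by (simp add: cis_mult[symmetric])
qed

lemma G_cont:
  assumes "continuous_on torus f"
  shows "continuous_on UNIV (\<lambda>y. f (cis (fst y), cis (snd y)) * cis (- (of_int u1 * fst y + of_int u2 * snd y)))"
proof -
  have "continuous_on UNIV (\<lambda>y. f (cis (fst y), cis (snd y)))"
    by (rule continuous_on_compose2[OF assms]) (auto intro!: continuous_intros)
  then show ?thesis by (intro continuous_intros)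
qed

lemma G_per:
  "per2 (\<lambda>y. f (cis (fst y), cis (snd y)) * cis (- (of_int u1 * fst y + of_int u2 * snd y)))"
  unfolding per2_def
proof (intro allI conjI)
  fix s t
  have "cis (- (of_int u1 * (s + 2*pi) + of_int u2 * t)) = cis (- (of_int u1 * s + of_int u2 * t) + 2*pi* of_int (-u1))"
    by (simp add: algebra_simps)
  then show "f (cis (fst (s + 2 * pi, t)), cis (snd (s + 2 * pi, t))) * cis (- (of_int u1 * fst (s + 2 * pi, t) + of_int u2 * snd (s + 2 * pi, t))) =
         f (cis (fst (s, t)), cis (snd (s, t))) * cis (- (of_int u1 * fst (s, t) + of_int u2 * snd (s, t)))"
    using cis_shift_int[of s 1] cis_shift_int[of "- (of_int u1 * s + of_int u2 * t)" "-u1"] by simp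
  have "cis (- (of_int u1 * s + of_int u2 * (t + 2*pi))) = cis (- (of_int u1 * s + of_int u2 * t) + 2*pi* of_int (-u2))"
    by (simp add: algebra_simps)
  then show "f (cis (fst (s, t + 2 * pi)), cis (snd (s, t + 2 * pi))) * cis (- (of_int u1 * fst (s, t + 2 * pi) + of_int u2 * snd (s, t + 2 * pi))) =
         f (cis (fst (s, t)), cis (snd (s, t))) * cis (- (of_int u1 * fst (s, t) + of_int u2 * snd (s, t)))"
    using cis_shift_int[of t 1] cis_shift_int[of "- (of_int u1 * s + of_int u2 * t)" "-u2"] by simp
qed

lemma fourier2_piA:
  assumes f: "continuous_on torus f" and BA: "B ** A = mat 1" and dt: "det A = 1 \<or> det A = -1"
  shows "fourier2 (piA A f) w1 w2 = fourier2 f (B$1$1*w1 + B$2$1*w2) (B$1$2*w1 + B$2$2*w2)"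
proof -
  define u1 u2 where "u1 = B$1$1*w1 + B$2$1*w2" "u2 = B$1$2*w1 + B$2$2*w2"
  define G where "G = (\<lambda>y. f (cis (fst y), cis (snd y)) * cis (- (of_int u1 * fst y + of_int u2 * snd y)))"
  have e: "B$1$1 * A$1$1 + B$1$2 * A$2$1 = 1" "B$1$1 * A$1$2 + B$1$2 * A$2$2 = 0"
          "B$2$1 * A$1$1 + B$2$2 * A$2$1 = 0" "B$2$1 * A$1$2 + B$2$2 * A$2$2 = 1"
    using BA mat2_eta[of A] mat2_eta[of B]
    by (metis mat2_mult mat2_one mat2_eq_iff)+
  have "u1 * A$1$1 + u2 * A$2$1 = w1 * (B$1$1 * A$1$1 + B$1$2 * A$2$1) + w2 * (B$2$1 * A$1$1 + B$2$2 * A$2$1)"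
    unfolding u1_u2_def by (simp add: algebra_simps)
  then have h1: "u1 * A$1$1 + u2 * A$2$1 = w1" using e by simp
  have "u1 * A$1$2 + u2 * A$2$2 = w1 * (B$1$1 * A$1$2 + B$1$2 * A$2$2) + w2 * (B$2$1 * A$1$2 + B$2$2 * A$2$2)"
    unfolding u1_u2_def by (simp add: algebra_simps)
  then have h2: "u1 * A$1$2 + u2 * A$2$2 = w2" using e by simp
  have ints: "(\<lambda>(s,t). piA A f (cis s, cis t) * cis (- (of_int w1 * s + of_int w2 * t))) = G \<circ> lin A"
  proof (intro ext, clarify)
    fix s t :: real
    have r: "of_int u1 * (of_int (A$1$1) * s + of_int (A$1$2) * t) + of_int u2 * (of_int (A$2$1) * s + of_int (A$2$2) * t)
         = of_int w1 * s + (of_int w2 * t :: real)"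
      using arg_cong[OF h1, of "\<lambda>x. of_int x * s :: real"] arg_cong[OF h2, of "\<lambda>x. of_int x * t :: real"]
      by (simp add: algebra_simps)
    show "piA A f (cis s, cis t) * cis (- (of_int w1 * s + of_int w2 * t)) = (G \<circ> lin A) (s, t)"
      unfolding G_def lin_def piA_def phiA_def
      apply (simp add: cis_power_int cis_mult mult.commute)
      apply (rule disjI2, rule arg_cong[where f=cis])
      using r by algebra
  qed
  have "fourier2 (piA A f) w1 w2 = integral Qsq (G \<circ> lin A) / (4 * pi^2)"
    unfolding fourier2_def Qsq_def[symmetric] ints ..
  also have "\<dots> = integral Qsq G / (4 * pi^2)"
    using INV_all[OF dt] G_cont[OF f] G_per unfolding INV_def G_def by simp
  also have "\<dots> = fourier2 f u1 u2"
    unfolding fourier2_def Qsq_def G_def by (simp add: case_prod_beta')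
  finally show ?thesis unfolding u1_u2_def .
qed



definition EIG :: "real \<Rightarrow> int^2^2 \<Rightarrow> real \<Rightarrow> bool" where
  "EIG \<alpha> A l \<longleftrightarrow> of_int (A$1$1) + of_int (A$1$2) * \<alpha> = l \<and> of_int (A$2$1) + of_int (A$2$2) * \<alpha> = l * \<alpha>"

lemma mat2_inv_mult:
  assumes "det A = 1 \<or> det A = -1"
  shows "mat2_inv A ** A = mat 1" "A ** mat2_inv A = mat 1"
proof -
  obtain a b c d where A: "A = mat2 a b c d" using mat2_eta by blast
  have D: "(a*d - b*c) * (a*d - b*c) = 1"
    using assms by (auto simp: A det_mat2)
  have I: "mat2_inv (mat2 a b c d) = mat2 ((a*d - b*c)*d) (-(a*d - b*c)*b) (-(a*d - b*c)*c) ((a*d - b*c)*a)"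
    by (simp add: mat2_inv_def det_mat2)
  have e1: "(a*d - b*c)*d*a + (-(a*d - b*c)*b)*c = 1" using D by algebra
  have e2: "(a*d - b*c)*d*b + (-(a*d - b*c)*b)*d = 0" by algebra
  have e3: "(-(a*d - b*c)*c)*a + ((a*d - b*c)*a)*c = 0" by algebra
  have e4: "(-(a*d - b*c)*c)*b + ((a*d - b*c)*a)*d = 1" using D by algebra
  show "mat2_inv A ** A = mat 1"
    unfolding A I mat2_mult mat2_one using e1 e2 e3 e4 by (simp only: mat2_eq_iff)
  have f1: "a*((a*d - b*c)*d) + b*(-(a*d - b*c)*c) = 1" using D by algebra
  have f2: "a*(-(a*d - b*c)*b) + b*((a*d - b*c)*a) = 0" by algebra
  have f3: "c*((a*d - b*c)*d) + d*(-(a*d - b*c)*c) = 0" by algebra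
  have f4: "c*(-(a*d - b*c)*b) + d*((a*d - b*c)*a) = 1" using D by algebra
  show "A ** mat2_inv A = mat 1"
    unfolding A I mat2_mult mat2_one using f1 f2 f3 f4 by (simp only: mat2_eq_iff)
qed

lemma det_mat2_inv:
  assumes "det A = 1 \<or> det A = -1" shows "det (mat2_inv A) = det A"
proof -
  obtain a b c d where A: "A = mat2 a b c d" using mat2_eta by blast
  have D: "(a*d - b*c) * (a*d - b*c) = 1"
    using assms by (auto simp: A det_mat2)
  have "((a*d - b*c)*d) * ((a*d - b*c)*a) - (-(a*d - b*c)*b) * (-(a*d - b*c)*c) = a*d - b*c"
    using D by algebra
  then show ?thesis by (simp add: A mat2_inv_def det_mat2)
qed

lemma EIG_inv:
  assumes BA: "B ** A = mat 1" and E: "EIG \<alpha> A l" and l: "l \<noteq> 0"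
  shows "EIG \<alpha> B (1/l)"
proof -
  have e: "B$1$1 * A$1$1 + B$1$2 * A$2$1 = 1" "B$1$1 * A$1$2 + B$1$2 * A$2$2 = 0"
          "B$2$1 * A$1$1 + B$2$2 * A$2$1 = 0" "B$2$1 * A$1$2 + B$2$2 * A$2$2 = 1"
    using BA mat2_eta[of A] mat2_eta[of B]
    by (metis mat2_mult mat2_one mat2_eq_iff)+
  have e': "real_of_int (B$1$1) * of_int (A$1$1) + of_int (B$1$2) * of_int (A$2$1) = 1"
           "real_of_int (B$1$1) * of_int (A$1$2) + of_int (B$1$2) * of_int (A$2$2) = 0"
           "real_of_int (B$2$1) * of_int (A$1$1) + of_int (B$2$2) * of_int (A$2$1) = 0"
           "real_of_int (B$2$1) * of_int (A$1$2) + of_int (B$2$2) * of_int (A$2$2) = 1"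
    using arg_cong[OF e(1), of real_of_int] arg_cong[OF e(2), of real_of_int]
      arg_cong[OF e(3), of real_of_int] arg_cong[OF e(4), of real_of_int] by simp_all
  have E1: "of_int (A$1$1) + of_int (A$1$2) * \<alpha> = l" and E2: "of_int (A$2$1) + of_int (A$2$2) * \<alpha> = l * \<alpha>"
    using E by (auto simp: EIG_def)
  have "l * (of_int (B$1$1) + of_int (B$1$2) * \<alpha>) = of_int (B$1$1) * (of_int (A$1$1) + of_int (A$1$2) * \<alpha>) + of_int (B$1$2) * (of_int (A$2$1) + of_int (A$2$2) * \<alpha>)"
    using E1 E2 by (simp add: algebra_simps)
  also have "\<dots> = 1" using e'(1,2) by algebra
  finally have 1: "of_int (B$1$1) + of_int (B$1$2) * \<alpha> = 1/l" using l by (simp add: field_simps)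
  have "l * (of_int (B$2$1) + of_int (B$2$2) * \<alpha>) = of_int (B$2$1) * (of_int (A$1$1) + of_int (A$1$2) * \<alpha>) + of_int (B$2$2) * (of_int (A$2$1) + of_int (A$2$2) * \<alpha>)"
    using E1 E2 by (simp add: algebra_simps)
  also have "\<dots> = \<alpha>" using e'(3,4) by algebra
  finally have 2: "of_int (B$2$1) + of_int (B$2$2) * \<alpha> = 1/l * \<alpha>" using l by (simp add: field_simps)
  show ?thesis using 1 2 by (simp add: EIG_def)
qed

lemma torus_nz: "(z, w) \<in> torus \<Longrightarrow> z \<noteq> 0 \<and> w \<noteq> 0"
  by (auto simp: torus_def)

lemma phiA_torus: "x \<in> torus \<Longrightarrow> phiA A x \<in> torus"
  by (auto simp: torus_def phiA_def norm_mult norm_power_int)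

lemma pow_comb:
  fixes z w :: complex
  assumes "z \<noteq> 0" "w \<noteq> 0"
  shows "(z powi a * w powi b) powi e * (z powi c * w powi d) powi g = z powi (a*e + c*g) * w powi (b*e + d*g)"
  using assms by (simp add: power_int_mult_distrib power_int_mult[symmetric] power_int_add algebra_simps)

lemma phiA_comp: assumes "x \<in> torus" shows "phiA B (phiA A x) = phiA (B ** A) x"
proof -
  obtain z w where x: "x = (z,w)" by force
  have nz: "z \<noteq> 0" "w \<noteq> 0" using torus_nz assms x by auto
  show ?thesis
    apply (simp add: x phiA_def pow_comb nz)
    apply (simp add: matrix_matrix_mult_def sum_2 algebra_simps)
    done
qed

lemma phiA_one: "phiA (mat 1) x = x"
  by (auto simp: phiA_def mat_def)

lemma phiA_cont: "continuous_on torus (phiA A)"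
proof -
  have "phiA A = (\<lambda>x. (fst x powi (A$1$1) * snd x powi (A$1$2), fst x powi (A$2$1) * snd x powi (A$2$2)))"
    by (auto simp: phiA_def)
  moreover have "continuous_on torus (\<lambda>x. (fst x powi (A$1$1) * snd x powi (A$1$2), fst x powi (A$2$1) * snd x powi (A$2$2)))"
    by (intro continuous_intros) (auto simp: torus_def)
  ultimately show ?thesis by simp
qed

lemma phiA_image:
  assumes "B ** A = mat 1" "A ** B = mat 1" shows "phiA A ` torus = torus"
proof
  show "phiA A ` torus \<subseteq> torus" using phiA_torus by blast
  show "torus \<subseteq> phiA A ` torus"
  proof
    fix x assume x: "x \<in> torus"
    have "phiA A (phiA B x) = x" using phiA_comp[OF x] assms phiA_one by simp
    then show "x \<in> phiA A ` torus" using phiA_torus[OF x, of B] by force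
  qed
qed

lemma piA_cont: "continuous_on torus f \<Longrightarrow> continuous_on torus (piA A f)"
  unfolding piA_def
  by (rule continuous_on_compose[OF phiA_cont continuous_on_subset]) (auto intro: phiA_torus)

lemma pres:
  assumes g: "GL2Z A" and E: "EIG \<alpha> A l" and l: "l > 0" and f: "f \<in> A_alg \<alpha>"
  shows "piA A f \<in> A_alg \<alpha>"
proof -
  define B where "B = mat2_inv A"
  have dt: "det A = 1 \<or> det A = -1" using g by (simp add: GL2Z_def)
  have BA: "B ** A = mat 1" using mat2_inv_mult[OF dt] by (simp add: B_def)
  have EB: "EIG \<alpha> B (1/l)" using EIG_inv[OF BA E] l by simp
  have fc: "continuous_on torus f" using f by (simp add: A_alg_def)
  show ?thesis unfolding A_alg_def
  proof (intro CollectI conjI allI impI)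
    show "continuous_on torus (piA A f)" by (rule piA_cont[OF fc])
    fix m n :: int assume mn: "real_of_int m + \<alpha> * real_of_int n < 0"
    define u1 u2 where "u1 = B$1$1*m + B$2$1*n" "u2 = B$1$2*m + B$2$2*n"
    have "real_of_int u1 + \<alpha> * of_int u2 = of_int m * (of_int (B$1$1) + of_int (B$1$2) * \<alpha>) + of_int n * (of_int (B$2$1) + of_int (B$2$2) * \<alpha>)"
      unfolding u1_u2_def by (simp add: algebra_simps)
    also have "\<dots> = (of_int m + \<alpha> * of_int n) / l" using EB by (simp add: EIG_def add_divide_distrib algebra_simps)
    also have "\<dots> < 0" using mn l by (simp add: divide_neg_pos)
    finally have "real_of_int u1 + \<alpha> * of_int u2 < 0" .
    then have "fourier2 f u1 u2 = 0" using f by (simp add: A_alg_def)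
    then show "fourier2 (piA A f) m n = 0"
      using fourier2_piA[OF fc BA dt] unfolding u1_u2_def by simp
  qed
qed

lemma imp_iso:
  assumes g: "GL2Z A" and E: "EIG \<alpha> A l" and l: "l > 0"
  shows "iso_aut \<alpha> A"
proof -
  define B where "B = mat2_inv A"
  have dt: "det A = 1 \<or> det A = -1" using g by (simp add: GL2Z_def)
  have BA: "B ** A = mat 1" and AB: "A ** B = mat 1" using mat2_inv_mult[OF dt] by (simp_all add: B_def)
  have EB: "EIG \<alpha> B (1/l)" using EIG_inv[OF BA E] l by simp
  have gB: "GL2Z B" using det_mat2_inv[OF dt] g by (simp add: GL2Z_def B_def)
  show ?thesis unfolding iso_aut_def
  proof (intro conjI ballI)
    fix f assume "f \<in> A_alg \<alpha>" then show "piA A f \<in> A_alg \<alpha>" using pres[OF g E l] by blast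
  next
    fix h assume h: "h \<in> A_alg \<alpha>"
    have "piA B h \<in> A_alg \<alpha>" using pres[OF gB EB _ h] l by simp
    moreover have "\<forall>x\<in>torus. piA A (piA B h) x = h x"
      using phiA_comp BA phiA_one by (simp add: piA_def)
    ultimately show "\<exists>f\<in>A_alg \<alpha>. \<forall>x\<in>torus. piA A f x = h x" by blast
  next
    fix f
    have "(\<lambda>x. norm (piA A f x)) ` torus = (\<lambda>x. norm (f x)) ` (phiA A ` torus)"
      by (auto simp: piA_def image_image)
    then show "supnorm (piA A f) = supnorm f" unfolding supnorm_def using phiA_image[OF BA AB] by simp
  qed
qed



lemma mono_in:
  assumes "0 \<le> of_int m + \<alpha> * of_int n" shows "mono m n \<in> A_alg \<alpha>"
  unfolding A_alg_def
proof (intro CollectI conjI allI impI)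
  have "mono m n = (\<lambda>x. fst x powi m * snd x powi n)" by (auto simp: mono_def)
  moreover have "continuous_on torus (\<lambda>x. fst x powi m * snd x powi n)"
    by (intro continuous_intros) (auto simp: torus_def)
  ultimately show "continuous_on torus (mono m n)" by simp
  fix j l :: int assume "real_of_int j + \<alpha> * real_of_int l < 0"
  then have "\<not> (m = j \<and> n = l)" using assms by auto
  then show "fourier2 (mono m n) j l = 0" by (simp add: fourier2_mono)
qed

lemma piA_mono:
  assumes "x \<in> torus"
  shows "piA A (mono m n) x = mono (A$1$1*m + A$2$1*n) (A$1$2*m + A$2$2*n) x"
proof -
  obtain z w where x: "x = (z,w)" by force
  have nz: "z \<noteq> 0" "w \<noteq> 0" using torus_nz assms x by auto
  show ?thesis by (simp add: x piA_def phiA_def mono_def pow_comb nz)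
qed

lemma halfplane:
  fixes u1 u2 \<alpha> :: real
  assumes H: "\<And>m n::int. 0 \<le> of_int m + \<alpha> * of_int n \<Longrightarrow> 0 \<le> of_int m * u1 + of_int n * u2"
  shows "u2 = \<alpha> * u1 \<and> 0 \<le> u1"
proof -
  have u1: "0 \<le> u1" using H[of 1 0] by simp
  define \<delta> where "\<delta> = u2 - \<alpha> * u1"
  have key: "of_int m * u1 + of_int n * u2 = u1 * (of_int m + \<alpha> * of_int n) + of_int n * \<delta>" for m n
    by (simp add: \<delta>_def algebra_simps)
  have "\<delta> = 0"
  proof (rule ccontr)
    assume "\<delta> \<noteq> 0"
    then consider "\<delta> > 0" | "\<delta> < 0" by linarith
    then show False
    proof cases
      case 1
      define N0 where "N0 = \<lceil>u1 / \<delta>\<rceil> + 1"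
      have "u1 / \<delta> < of_int N0" unfolding N0_def by linarith
      then have N0: "u1 < of_int N0 * \<delta>" using 1 by (simp add: field_simps)
      define m where "m = \<lceil>\<alpha> * of_int N0\<rceil>"
      have a: "0 \<le> of_int m + \<alpha> * of_int (- N0)" "of_int m + \<alpha> * of_int (- N0) < 1"
        unfolding m_def by linarith+
      have "u1 * (of_int m + \<alpha> * of_int (- N0)) \<le> u1"
        using a u1 by (simp add: mult_left_le)
      then have "of_int m * u1 + of_int (- N0) * u2 < 0" using key[of m "-N0"] N0 by simp
      then show False using H[OF a(1)] by simp
    next
      case 2
      define N0 where "N0 = \<lceil>u1 / (-\<delta>)\<rceil> + 1"
      have "u1 / (-\<delta>) < of_int N0" unfolding N0_def by linarith
      then have N0: "u1 < of_int N0 * (-\<delta>)" using 2 by (simp add: field_simps)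
      define m where "m = \<lceil>- \<alpha> * of_int N0\<rceil>"
      have a: "0 \<le> of_int m + \<alpha> * of_int N0" "of_int m + \<alpha> * of_int N0 < 1"
        unfolding m_def by linarith+
      have "u1 * (of_int m + \<alpha> * of_int N0) \<le> u1"
        using a u1 by (simp add: mult_left_le)
      then have "of_int m * u1 + of_int N0 * u2 < 0" using key[of m N0] N0 by simp
      then show False using H[OF a(1)] by simp
    qed
  qed
  then show ?thesis using u1 by (simp add: \<delta>_def)
qed

lemma lin_zero:
  assumes "\<alpha> \<notin> \<rat>" "real_of_int a + real_of_int b * \<alpha> = 0" shows "a = 0 \<and> b = 0"
proof (cases "b = 0")
  case True then show ?thesis using assms by simp
next
  case False
  then have "\<alpha> = - of_int a / of_int b" using assms(2) by (simp add: field_simps)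
  then have "\<alpha> \<in> \<rat>" by simp
  then show ?thesis using assms(1) by simp
qed

lemma iso_imp:
  assumes irr: "\<alpha> \<notin> \<rat>" and g: "GL2Z A" and iso: "iso_aut \<alpha> A"
  shows "\<exists>l>0. EIG \<alpha> A l"
proof -
  define u1 where "u1 = of_int (A$1$1) + of_int (A$1$2) * \<alpha>"
  define u2 where "u2 = of_int (A$2$1) + of_int (A$2$2) * \<alpha>"
  have H: "0 \<le> of_int m * u1 + of_int n * u2" if mn: "0 \<le> of_int m + \<alpha> * of_int n" for m n :: int
  proof -
    define j l where "j = A$1$1*m + A$2$1*n" "l = A$1$2*m + A$2$2*n"
    have "piA A (mono m n) \<in> A_alg \<alpha>" using iso mono_in[OF mn] by (simp add: iso_aut_def)
    moreover have "fourier2 (piA A (mono m n)) j l = 1"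
      using fourier2_cong[of "piA A (mono m n)" "mono j l"] piA_mono fourier2_mono
      unfolding j_l_def by simp
    ultimately have "\<not> (real_of_int j + \<alpha> * of_int l < 0)" by (auto simp: A_alg_def)
    moreover have "real_of_int j + \<alpha> * of_int l = of_int m * u1 + of_int n * u2"
      unfolding j_l_def u1_def u2_def by (simp add: algebra_simps)
    ultimately show ?thesis by simp
  qed
  have h: "u2 = \<alpha> * u1 \<and> 0 \<le> u1" by (rule halfplane) (use H in auto)
  have "u1 \<noteq> 0"
  proof
    assume "u1 = 0"
    then have "u2 = 0" using h by simp
    then have "A$1$1 = 0 \<and> A$1$2 = 0" "A$2$1 = 0 \<and> A$2$2 = 0"
      using lin_zero[OF irr] \<open>u1 = 0\<close> unfolding u1_def u2_def by blast+
    then show False using g by (simp add: GL2Z_def det_2)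
  qed
  then have "u1 > 0" using h by simp
  moreover have "EIG \<alpha> A u1" using h unfolding EIG_def u1_def u2_def by (simp add: mult.commute)
  ultimately show ?thesis by blast
qed



lemma powi_exp: "(e::real) > 0 \<Longrightarrow> e powi n = exp (of_int n * ln e)"
  using exp_power_int[of "ln e" n] by simp

lemma arch_powi:
  fixes e u :: real assumes e: "e > 1" and u: "u > 0"
  shows "\<exists>n::int. e powi n \<le> u \<and> u < e powi (n+1)"
proof -
  define n where "n = \<lfloor>ln u / ln e\<rfloor>"
  have le: "ln e > 0" using e by simp
  have "of_int n \<le> ln u / ln e" "ln u / ln e < of_int n + 1" unfolding n_def by linarith+
  then have 1: "of_int n * ln e \<le> ln u" and 2: "ln u < (of_int n + 1) * ln e"
    using le by (simp_all add: field_simps)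
  have "e powi n \<le> u" using 1 u e by (simp add: powi_exp) (metis exp_le_cancel_iff exp_ln)
  moreover have "u < e powi (n+1)" using 2 u e by (simp add: powi_exp) (metis exp_less_cancel_iff exp_ln)
  ultimately show ?thesis by blast
qed

definition UVn :: "int \<Rightarrow> real \<Rightarrow> real \<Rightarrow> int \<Rightarrow> bool" where
  "UVn N \<omega> u e \<longleftrightarrow> (\<exists>x z::int. u = of_int x + of_int z * \<omega> \<and> x^2 - N * z^2 = e)"

lemma UVn_mult:
  assumes w: "\<omega>^2 = of_int N" and "UVn N \<omega> u e" "UVn N \<omega> v e'"
  shows "UVn N \<omega> (u * v) (e*e')"
proof -
  obtain x z where u: "u = of_int x + of_int z * \<omega>" "x^2 - N*z^2 = e" using assms(2) UVn_def by auto
  obtain x' z' where v: "v = of_int x' + of_int z' * \<omega>" "x'^2 - N*z'^2 = e'" using assms(3) UVn_def by auto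
  have "u * v = of_int (x*x' + N*z*z') + of_int (x*z' + x'*z) * \<omega>"
    using w unfolding u v by (simp add: algebra_simps power2_eq_square)
  moreover have "(x*x' + N*z*z')^2 - N * (x*z' + x'*z)^2 = e * e'"
    unfolding u(2)[symmetric] v(2)[symmetric] by algebra
  ultimately show ?thesis unfolding UVn_def by blast
qed

lemma UVn_inv:
  assumes w: "\<omega>^2 = of_int N" and "UVn N \<omega> u e" and e: "e = 1 \<or> e = -1"
  shows "UVn N \<omega> (1/u) e"
proof -
  obtain x z where u: "u = of_int x + of_int z * \<omega>" "x^2 - N*z^2 = e" using assms(2) UVn_def by auto
  have "u * (of_int (e*x) + of_int (-e*z) * \<omega>) = of_int e * (of_int x^2 - of_int N * of_int z^2)"
    unfolding u w[symmetric] by (simp add: algebra_simps power2_eq_square)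
  also have "\<dots> = of_int (e*e)" using arg_cong[OF u(2), of real_of_int] by simp
  also have "\<dots> = 1" using e by auto
  finally have "1/u = of_int (e*x) + of_int (-e*z) * \<omega>"
    by (metis mult_cancel_left1 nonzero_mult_div_cancel_left divide_eq_0_iff zero_neq_one mult_eq_0_iff)
  moreover have "(e*x)^2 - N*(-e*z)^2 = e" using e u(2) by (auto simp: power2_eq_square algebra_simps)
  ultimately show ?thesis unfolding UVn_def by blast
qed

lemma UVn_pos_parts:
  fixes \<omega> u :: real
  assumes w: "\<omega>^2 = of_int N" and om: "\<omega> > 0" and u: "u = of_int x + of_int z * \<omega>" "x^2 - N*z^2 = e"
    and e: "e = 1 \<or> e = -1" and u1: "u > 1"
  shows "x > 0 \<and> z > 0"
proof -
  define u' where "u' = of_int x - of_int z * \<omega>"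
  have "u * u' = of_int x^2 - \<omega>^2 * of_int z^2"
    unfolding u u'_def power2_eq_square by algebra
  also have "\<dots> = of_int (x^2 - N*z^2)" using w by simp
  finally have "u * u' = of_int e" using u(2) by simp
  then have "u' = of_int e / u" using u1 by (simp add: field_simps)
  then have "\<bar>u'\<bar> = 1 / u" using e u1 by auto
  then have "\<bar>u'\<bar> < 1" using u1 by simp
  then have "of_int x > (0::real)" "of_int z * \<omega> > 0" using u1 unfolding u u'_def by auto
  then show ?thesis using om by (simp add: zero_less_mult_iff)
qed

lemma powi_closed:
  assumes w: "\<omega>^2 = of_int N" and "UVn N \<omega> e 1 \<or> UVn N \<omega> e (-1)"
  shows "UVn N \<omega> (e powi n) 1 \<or> UVn N \<omega> (e powi n) (-1)"
proof -
  have nat: "UVn N \<omega> (e ^ m) 1 \<or> UVn N \<omega> (e ^ m) (-1)" for m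
  proof (induction m)
    case 0
    have "UVn N \<omega> 1 1" unfolding UVn_def by (rule exI[of _ 1], rule exI[of _ 0]) simp
    then show ?case by simp
  next
    case (Suc m)
    then show ?case using assms UVn_mult[OF w, of e _ "e^m"] by (auto simp: mult.commute) fastforce+
  qed
  show ?thesis
  proof (cases "n \<ge> 0")
    case True then show ?thesis using nat[of "nat n"] by (simp add: power_int_def)
  next
    case False
    have "UVn N \<omega> (1/(e ^ nat (-n))) 1 \<or> UVn N \<omega> (1/(e ^ nat (-n))) (-1)"
      using nat[of "nat (-n)"] UVn_inv[OF w] by blast
    then show ?thesis using False by (simp add: power_int_def divide_inverse power_inverse)
  qed
qed

lemma pell_gen:
  assumes w: "\<omega>^2 = of_int N" and om: "\<omega> > 0"
    and eps: "\<epsilon> > 1" "UVn N \<omega> \<epsilon> 1 \<or> UVn N \<omega> \<epsilon> (-1)"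
    and mn: "\<And>u. u > 1 \<Longrightarrow> UVn N \<omega> u 1 \<or> UVn N \<omega> u (-1) \<Longrightarrow> \<epsilon> \<le> u"
    and u: "u > 0" "UVn N \<omega> u 1 \<or> UVn N \<omega> u (-1)"
  shows "\<exists>n::int. u = \<epsilon> powi n"
proof -
  obtain n where n: "\<epsilon> powi n \<le> u" "u < \<epsilon> powi (n+1)" using arch_powi[OF eps(1) u(1)] by blast
  define v where "v = u * \<epsilon> powi (-n)"
  have ep: "\<epsilon> powi n > 0" using eps by simp
  have pinv: "\<epsilon> powi (-n) = 1 / \<epsilon> powi n" by (simp add: power_int_minus divide_inverse)
  have v1: "v \<ge> 1" using n ep by (simp add: v_def pinv)
  have "\<epsilon> powi (n+1) = \<epsilon> powi n * \<epsilon>" using eps by (simp add: power_int_add)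
  then have v2: "v < \<epsilon>" using n ep by (simp add: v_def pinv field_simps)
  have "UVn N \<omega> (\<epsilon> powi (-n)) 1 \<or> UVn N \<omega> (\<epsilon> powi (-n)) (-1)" by (rule powi_closed[OF w eps(2)])
  then have "UVn N \<omega> v 1 \<or> UVn N \<omega> v (-1)" using u(2) UVn_mult[OF w, of u _ "\<epsilon> powi (-n)"]
    unfolding v_def by fastforce
  then have "v = 1" using mn[of v] v1 v2 by force
  then have "u = \<epsilon> powi n" unfolding v_def pinv using ep by (simp add: field_simps)
  then show ?thesis by blast
qed



definition Mx :: "int \<Rightarrow> int \<Rightarrow> int \<Rightarrow> int \<Rightarrow> int \<Rightarrow> int^2^2" where
  "Mx R Q C x y = mat2 (-R*y + x) (Q*y) (C*y) (R*y + x)"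

lemma quad_from_kappa:
  fixes \<alpha> \<kappa> :: real
  assumes "\<kappa> = of_int Q * \<alpha> - of_int R" "\<kappa>^2 = of_int (R^2 + Q*C)" "Q \<noteq> 0"
  shows "of_int Q * \<alpha>^2 - 2 * of_int R * \<alpha> - of_int C = 0"
proof -
  have "of_int Q * (of_int Q * \<alpha>^2 - 2 * of_int R * \<alpha> - of_int C) = \<kappa>^2 - of_int (R^2 + Q*C)"
    unfolding assms(1) by (simp add: algebra_simps power2_eq_square)
  then show ?thesis using assms(2,3) by simp
qed

lemma EIG_Mx:
  fixes \<alpha> \<kappa> :: real
  assumes "\<kappa> = of_int Q * \<alpha> - of_int R" "\<kappa>^2 = of_int (R^2 + Q*C)" "Q \<noteq> 0"
  shows "EIG \<alpha> (Mx R Q C x y) (of_int x + of_int y * \<kappa>)"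
proof -
  have h: "of_int Q * \<alpha>^2 - 2 * of_int R * \<alpha> - of_int C = 0" by (rule quad_from_kappa[OF assms])
  have 1: "of_int (-R*y + x) + of_int (Q*y) * \<alpha> = of_int x + of_int y * \<kappa>"
    unfolding assms(1) by (simp add: algebra_simps)
  have "of_int (C*y) + of_int (R*y + x) * \<alpha> - (of_int x + of_int y * \<kappa>) * \<alpha>
      = - of_int y * (of_int Q * \<alpha>^2 - 2 * of_int R * \<alpha> - of_int C)"
    unfolding assms(1) by (simp add: algebra_simps power2_eq_square)
  then have 2: "of_int (C*y) + of_int (R*y + x) * \<alpha> = (of_int x + of_int y * \<kappa>) * \<alpha>"
    using h by simp
  show ?thesis using 1 2 by (simp add: EIG_def Mx_def)
qed

lemma det_Mx: "det (Mx R Q C x y) = x^2 - (R^2 + Q*C) * y^2"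
  by (simp add: Mx_def det_mat2 algebra_simps power2_eq_square)

lemma EIG_unique:
  assumes irr: "\<alpha> \<notin> \<rat>" and "EIG \<alpha> A l" "EIG \<alpha> B l" shows "A = B"
proof -
  have "real_of_int (A$1$1 - B$1$1) + of_int (A$1$2 - B$1$2) * \<alpha> = 0"
    using assms(2,3) by (simp add: EIG_def algebra_simps)
  from lin_zero[OF irr this] have 1: "A$1$1 = B$1$1" "A$1$2 = B$1$2" by auto
  have "real_of_int (A$2$1 - B$2$1) + of_int (A$2$2 - B$2$2) * \<alpha> = 0"
    using assms(2,3) by (simp add: EIG_def algebra_simps)
  from lin_zero[OF irr this] have 2: "A$2$1 = B$2$1" "A$2$2 = B$2$2" by auto
  from 1 2 have "A$1$1 = B$1$1" "A$1$2 = B$1$2" "A$2$1 = B$2$1" "A$2$2 = B$2$2" by auto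
  then show ?thesis by (metis mat2_eta)
qed

lemma EIG_rep:
  fixes \<alpha> :: real
  assumes irr: "\<alpha> \<notin> \<rat>" and Q: "Q > 0" and cop: "coprime Q (gcd (2*R) C)"
    and h: "of_int Q * \<alpha>^2 - 2 * of_int R * \<alpha> - of_int C = 0"
    and E: "EIG \<alpha> A l"
  shows "\<exists>x y. A = Mx R Q C x y"
proof -
  define a b c d where "a = A$1$1" "b = A$1$2" "c = A$2$1" "d = A$2$2"
  have A: "A = mat2 a b c d" unfolding a_b_c_d_def by (rule mat2_eta)
  have E1: "of_int a + of_int b * \<alpha> = l" and E2: "of_int c + of_int d * \<alpha> = l * \<alpha>"
    using E unfolding EIG_def a_b_c_d_def by auto
  have "real_of_int (Q*c - b*C) + of_int (Q*d - Q*a - 2*R*b) * \<alpha>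
      = of_int Q * (of_int c + of_int d * \<alpha> - (of_int a + of_int b * \<alpha>) * \<alpha>)
        + of_int b * (of_int Q * \<alpha>^2 - 2 * of_int R * \<alpha> - of_int C)"
    by (simp add: algebra_simps power2_eq_square)
  also have "\<dots> = 0" using E1 E2 h by simp
  finally have "Q*c - b*C = 0 \<and> Q*d - Q*a - 2*R*b = 0" using lin_zero[OF irr] by blast
  then have e1: "Q*c = b*C" and e2: "Q*(d - a) = 2*R*b" by (auto simp: algebra_simps)
  have "Q dvd b*C" "Q dvd b*(2*R)" using e1 e2 by (metis dvd_triv_left, metis dvd_triv_left mult.commute)
  then have "Q dvd gcd (b*(2*R)) (b*C)" by simp
  then have "Q dvd b * gcd (2*R) C" by (simp add: gcd_mult_left)
  then have "Q dvd b" using cop by (simp add: coprime_dvd_mult_left_iff)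
  then obtain y where b: "b = Q*y" by blast
  have c: "c = C*y" using e1 Q unfolding b by (simp add: algebra_simps)
  have "Q*(d - a) = Q*(2*R*y)" using e2 unfolding b by (simp add: algebra_simps)
  then have "d - a = 2*R*y" using Q by (metis mult_cancel_left less_irrefl)
  then have "A = Mx R Q C (d - R*y) y" unfolding A Mx_def b c by (simp add: algebra_simps)
  then show ?thesis by blast
qed

lemma EIG_mult:
  assumes "EIG \<alpha> A l" "EIG \<alpha> B l'" shows "EIG \<alpha> (A ** B) (l*l')"
proof -
  have A1: "of_int (A$1$1) + of_int (A$1$2) * \<alpha> = l" and A2: "of_int (A$2$1) + of_int (A$2$2) * \<alpha> = l * \<alpha>"
   and B1: "of_int (B$1$1) + of_int (B$1$2) * \<alpha> = l'" and B2: "of_int (B$2$1) + of_int (B$2$2) * \<alpha> = l' * \<alpha>"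
    using assms by (auto simp: EIG_def)
  have "of_int ((A**B)$1$1) + of_int ((A**B)$1$2) * \<alpha>
      = of_int (A$1$1) * (of_int (B$1$1) + of_int (B$1$2) * \<alpha>) + of_int (A$1$2) * (of_int (B$2$1) + of_int (B$2$2) * \<alpha>)"
    by (simp add: matrix_matrix_mult_def sum_2 algebra_simps)
  also have "\<dots> = l' * (of_int (A$1$1) + of_int (A$1$2) * \<alpha>)" using B1 B2 by (simp add: algebra_simps)
  finally have 1: "of_int ((A**B)$1$1) + of_int ((A**B)$1$2) * \<alpha> = l * l'" using A1 by simp
  have "of_int ((A**B)$2$1) + of_int ((A**B)$2$2) * \<alpha>
      = of_int (A$2$1) * (of_int (B$1$1) + of_int (B$1$2) * \<alpha>) + of_int (A$2$2) * (of_int (B$2$1) + of_int (B$2$2) * \<alpha>)"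
    by (simp add: matrix_matrix_mult_def sum_2 algebra_simps)
  also have "\<dots> = l' * (of_int (A$2$1) + of_int (A$2$2) * \<alpha>)" using B1 B2 by (simp add: algebra_simps)
  finally have 2: "of_int ((A**B)$2$1) + of_int ((A**B)$2$2) * \<alpha> = l * l' * \<alpha>" using A2 by simp
  show ?thesis using 1 2 by (simp add: EIG_def)
qed

lemma EIG_one: "EIG \<alpha> (mat 1) 1"
  by (simp add: EIG_def mat_def)

lemma EIG_matpow: "EIG \<alpha> G l \<Longrightarrow> EIG \<alpha> (matpow G n) (l^n)"
  by (induction n) (auto simp: EIG_one intro: EIG_mult)

lemma EIG_matzpow:
  assumes "EIG \<alpha> G l" "l \<noteq> 0" "det G = 1 \<or> det G = -1"
  shows "EIG \<alpha> (matzpow G n) (l powi n)"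
proof (cases "0 \<le> n")
  case True then show ?thesis using EIG_matpow[OF assms(1)] by (simp add: matzpow_def power_int_def)
next
  case False
  have "EIG \<alpha> (mat2_inv G) (1/l)" using EIG_inv[OF mat2_inv_mult(1)[OF assms(3)] assms(1,2)] .
  from EIG_matpow[OF this, of "nat (-n)"] show ?thesis using False
    by (simp add: matzpow_def power_int_def power_one_over inverse_eq_divide)
qed

lemma min_from_fund:
  fixes \<omega> u :: real
  assumes w: "\<omega>^2 = of_int N" and om: "\<omega> > 0" and N: "N > 0" and e: "e = 1 \<or> e = -1"
    and f: "fund_sol N e x1 y1" and U: "UVn N \<omega> u e" and u: "u > 1"
  shows "of_int x1 + of_int y1 * \<omega> \<le> u"
proof -
  obtain x z where xz: "u = of_int x + of_int z * \<omega>" "x^2 - N*z^2 = e" using U UVn_def by auto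
  have pos: "x > 0 \<and> z > 0" using UVn_pos_parts[OF w om xz e u] .
  have f': "x1 > 0" "y1 > 0" "x1^2 - N*y1^2 = e" and le: "x1 \<le> x" using f pos xz by (auto simp: fund_sol_def)
  have "x1^2 \<le> x^2" using le f' by (simp add: power_mono)
  then have "N*y1^2 \<le> N*z^2" using f'(3) xz(2) by linarith
  then have "y1^2 \<le> z^2" using N by simp
  then have "y1 \<le> z" using pos f' by (simp add: abs_le_square_iff[symmetric])
  then have "of_int y1 * \<omega> \<le> of_int z * \<omega>" using om by simp
  moreover have "real_of_int x1 \<le> of_int x" using le by simp
  ultimately show ?thesis using xz by simp
qed



lemma setup_int:
  fixes r :: int and p q s :: nat
  assumes q: "q > 0" and s: "s > 0" and so: "odd s" and rs: "gcd r (int s) = 1"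
    and d1_def: "d1 = gcd (int p * int s^2 - int q * r^2) (int q * int s)"
    and N_def: "N = (int p * int q * int s^4) div d1^2"
    and Rd_def: "Rd = int q * r * int s div d1" and Qd_def: "Qd = int q * int s^2 div d1"
    and Cd_def: "Cd = (int p * int s^2 - int q * r^2) div d1"
  shows "d1 > 0" "d1 * Rd = int q * r * int s" "d1 * Qd = int q * int s^2"
    "d1 * Cd = int p * int s^2 - int q * r^2"
    "Qd > 0" "N = Rd^2 + Qd*Cd" "coprime Qd (gcd (2*Rd) Cd)"
proof -
  define X Y where "X = int p * int s^2 - int q * r^2" "Y = int q * int s"
  have Y: "Y > 0" using q s unfolding X_Y_def by simp
  have d1: "d1 = gcd X Y" unfolding d1_def X_Y_def ..
  show dp: "d1 > 0" using Y d1 by simp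
  have dY: "d1 dvd Y" and dX: "d1 dvd X" using d1 by auto
  have "d1 dvd int q * r * int s" using dY unfolding X_Y_def by (metis dvd_mult2 mult.assoc mult.commute)
  then show R: "d1 * Rd = int q * r * int s" unfolding Rd_def by simp
  have "int q * int s^2 = (int q * int s) * int s" by (simp add: power2_eq_square)
  then have "d1 dvd int q * int s^2" using dY unfolding X_Y_def by (metis dvd_mult2)
  then show Qe: "d1 * Qd = int q * int s^2" unfolding Qd_def by simp
  show C: "d1 * Cd = int p * int s^2 - int q * r^2" using dX unfolding Cd_def X_Y_def by simp
  show "Qd > 0" using Qe dp q s by (metis zero_less_mult_iff of_nat_0_less_iff zero_less_power not_less_iff_gr_or_eq)
  have "d1^2 * (Rd^2 + Qd*Cd) = (d1*Rd)^2 + (d1*Qd)*(d1*Cd)" by (simp add: algebra_simps power2_eq_square)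
  also have "\<dots> = int p * int q * int s^4" unfolding R Qe C by (simp add: algebra_simps power2_eq_square power4_eq_xxxx)
  finally show "N = Rd^2 + Qd*Cd" unfolding N_def using dp by (metis nonzero_mult_div_cancel_left power_not_zero less_irrefl)
  have c2: "coprime (int s) 2" using so by simp
  have cr: "coprime (int s) r" using rs by (simp add: coprime_iff_gcd_eq_1 gcd.commute)
  have cs: "coprime (int s) (2*r)" using c2 cr by (simp add: coprime_mult_right_iff)
  have "gcd (Y * int s) (Y * (2*r)) = Y * gcd (int s) (2*r)" using gcd_mult_distrib_int[of Y] Y by simp
  also have "\<dots> = Y" using cs by simp
  finally have g1: "gcd (Y * int s) (Y * (2*r)) = Y" .
  have "d1 * gcd Qd (gcd (2*Rd) Cd) = gcd (d1*Qd) (gcd (d1*(2*Rd)) (d1*Cd))"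
    using gcd_mult_distrib_int[of d1] dp by simp
  also have "\<dots> = gcd (Y * int s) (gcd (Y*(2*r)) X)"
  proof -
    have e1: "d1*(2*Rd) = Y*(2*r)" using R unfolding X_Y_def by (simp add: algebra_simps)
    have e2: "d1*Qd = Y * int s" using Qe unfolding X_Y_def by (simp add: power2_eq_square)
    have e3: "d1*Cd = X" using C unfolding X_Y_def by simp
    show ?thesis unfolding e1 e2 e3 ..
  qed
  also have "\<dots> = gcd (gcd (Y * int s) (Y*(2*r))) X" by (simp add: gcd.assoc)
  also have "\<dots> = d1" unfolding g1 d1 by (simp add: gcd.commute)
  finally have "gcd Qd (gcd (2*Rd) Cd) = 1" using dp by (metis mult_cancel_left1 less_irrefl)
  then show "coprime Qd (gcd (2*Rd) Cd)" by (simp add: coprime_iff_gcd_eq_1)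
qed

lemma setup_real:
  fixes r :: int and p q s :: nat and k :: int and \<alpha> :: real
  assumes k: "k = 1 \<or> k = -1" and q: "q > 0" and s: "s > 0"
    and al: "\<alpha> = real_of_int r / real s + real_of_int k * sqrt (real p / real q)"
    and irr: "\<alpha> \<notin> \<rat>"
    and d: "d1 > 0" "d1 * Rd = int q * r * int s" "d1 * Qd = int q * int s^2" "Qd > 0"
    and NN: "d1^2 * N = int p * int q * int s^4"
  defines "\<kappa> \<equiv> of_int Qd * \<alpha> - of_int Rd"
  shows "\<kappa>^2 = of_int N" "\<kappa> = of_int k * \<bar>\<kappa>\<bar>" "\<kappa> \<notin> \<rat>"
proof -
  define t where "t = sqrt (real p / real q)"
  have t0: "t \<ge> 0" unfolding t_def by simp
  have t2: "t^2 = real p / real q" unfolding t_def by simp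
  have dr: "real_of_int d1 > 0" using d by simp
  have "of_int d1 * \<kappa> = of_int (d1*Qd) * \<alpha> - of_int (d1*Rd)" unfolding \<kappa>_def by (simp add: algebra_simps)
  also have "\<dots> = real q * real s^2 * \<alpha> - real q * of_int r * real s" using d by simp
  also have "\<dots> = real q * real s^2 * of_int k * t" using s unfolding al t_def by (simp add: field_simps power2_eq_square)
  finally have dk: "of_int d1 * \<kappa> = real q * real s^2 * of_int k * t" .
  have k2: "(of_int k :: real)^2 = 1" using k by auto
  have "(of_int d1 * \<kappa>)^2 = real q^2 * real s^4 * t^2" unfolding dk using k2
    by (simp add: power_mult_distrib power2_eq_square power4_eq_xxxx)
  also have "\<dots> = real p * real q * real s^4" unfolding t2 using q by (simp add: power2_eq_square field_simps)
  also have "\<dots> = of_int d1^2 * of_int N" using arg_cong[OF NN, of real_of_int] by simp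
  finally show "\<kappa>^2 = of_int N" using dr by (simp add: power_mult_distrib)
  define Z where "Z = real q * real s^2 * t / of_int d1"
  have Z: "Z \<ge> 0" unfolding Z_def using t0 dr by simp
  have "\<kappa> = of_int k * Z" unfolding Z_def using dk dr by (simp add: field_simps)
  then show "\<kappa> = of_int k * \<bar>\<kappa>\<bar>" using k Z by auto
  show "\<kappa> \<notin> \<rat>"
  proof
    assume "\<kappa> \<in> \<rat>"
    have "\<alpha> = (\<kappa> + of_int Rd) / of_int Qd" using d unfolding \<kappa>_def by simp
    also have "\<dots> \<in> \<rat>" using \<open>\<kappa> \<in> \<rat>\<close> by (intro Rats_divide Rats_add) auto
    finally show False using irr by simp
  qed
qed



lemma main_char:
  fixes \<alpha> \<kappa> \<omega> :: real
  assumes irr: "\<alpha> \<notin> \<rat>" and Q: "Q > 0" and cop: "coprime Q (gcd (2*R) C)"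
    and kap: "\<kappa> = of_int Q * \<alpha> - of_int R" and k2: "\<kappa>^2 = of_int N" and NRC: "N = R^2 + Q*C"
    and k: "k = 1 \<or> k = -1" and kom: "\<kappa> = of_int k * \<omega>"
    and G: "EIG \<alpha> G lG" "det G = 1 \<or> det G = -1" "lG > 0"
    and pell: "\<And>u. u > 0 \<Longrightarrow> UVn N \<omega> u 1 \<or> UVn N \<omega> u (-1) \<Longrightarrow> \<exists>n. u = lG powi n"
    and A: "GL2Z A"
  shows "iso_aut \<alpha> A \<longleftrightarrow> (\<exists>n::int. A = matzpow G n)"
proof
  assume "iso_aut \<alpha> A"
  then obtain l where l: "l > 0" "EIG \<alpha> A l" using iso_imp[OF irr A] by blast
  have k2': "\<kappa>^2 = of_int (R^2 + Q*C)" using k2 NRC by simp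
  have h: "of_int Q * \<alpha>^2 - 2 * of_int R * \<alpha> - of_int C = 0"
    using quad_from_kappa[OF kap k2'] Q by simp
  obtain x y where Ax: "A = Mx R Q C x y" using EIG_rep[OF irr Q cop h l(2)] by blast
  have "EIG \<alpha> A (of_int x + of_int y * \<kappa>)" using EIG_Mx[OF kap k2'] Q Ax by simp
  then have lx: "l = of_int x + of_int y * \<kappa>" using l(2) by (simp add: EIG_def)
  have dA: "det A = x^2 - N*y^2" using Ax det_Mx NRC by simp
  have "k*k = 1" using k by auto
  then have "(k*y)^2 = y^2" by (simp add: power_mult_distrib power2_eq_square)
  then have "UVn N \<omega> l (det A)" unfolding UVn_def lx kom dA
    by (intro exI[of _ x] exI[of _ "k*y"]) (simp add: algebra_simps)
  then have "UVn N \<omega> l 1 \<or> UVn N \<omega> l (-1)" using A by (auto simp: GL2Z_def)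
  then obtain n where "l = lG powi n" using pell l(1) by blast
  moreover have "EIG \<alpha> (matzpow G n) (lG powi n)" using EIG_matzpow[OF G(1) _ G(2)] G(3) by simp
  ultimately have "A = matzpow G n" using EIG_unique[OF irr l(2)] by simp
  then show "\<exists>n. A = matzpow G n" by blast
next
  assume "\<exists>n. A = matzpow G n"
  then obtain n where n: "A = matzpow G n" by blast
  have "EIG \<alpha> A (lG powi n)" using EIG_matzpow[OF G(1) _ G(2)] G(3) n by simp
  then show "iso_aut \<alpha> A" using imp_iso[OF A] G(3) by simp
qed

theorem mainTheorem16:
  fixes r :: int and p q s :: nat and k :: int and \<alpha> :: real
  assumes "k = 1 \<or> k = -1"
    and "q > 0" and "s > 0" and "odd s"
    and "gcd r (int s) = 1" and "gcd p q = 1"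
    and "\<alpha> = real_of_int r / real s + real_of_int k * sqrt (real p / real q)"
    and "\<alpha> > 0" and "\<alpha> \<notin> \<rat>"
  defines "d1 \<equiv> gcd (int p * int s^2 - int q * r^2) (int q * int s)"
  defines "N \<equiv> (int p * int q * int s^4) div d1^2"
  shows
    "(\<not> (\<exists>x y :: int. x^2 - N * y^2 = -1) \<longrightarrow>
        (\<forall>x1 y1. fund_sol N 1 x1 y1 \<longrightarrow>
          (\<forall>A. GL2Z A \<longrightarrow>
             (iso_aut \<alpha> A \<longleftrightarrow>
               (\<exists>n::int. A = matzpow
                  (mat2 (- (int q * r * int s div d1) * y1 + x1) ((int q * int s^2 div d1) * y1)
                        (((int p * int s^2 - int q * r^2) div d1) * y1) ((int q * r * int s div d1) * y1 + x1))
                  n)))))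
   \<and> ((\<exists>x y :: int. x^2 - N * y^2 = -1) \<longrightarrow>
        (\<forall>x1' y1'. fund_sol N (-1) x1' y1' \<longrightarrow>
          (\<forall>A. GL2Z A \<longrightarrow>
             (iso_aut \<alpha> A \<longleftrightarrow>
               (\<exists>n::int. A = matzpow
                  (mat2 (- (int q * r * int s div d1) * k * y1' + x1') ((int q * int s^2 div d1) * k * y1')
                        (((int p * int s^2 - int q * r^2) div d1) * k * y1') ((int q * r * int s div d1) * k * y1' + x1'))
                  n)))))"
proof -
  note ks = assms(1) and irr = assms(9)
  define Rd where "Rd = int q * r * int s div d1"
  define Qd where "Qd = int q * int s^2 div d1"
  define Cd where "Cd = (int p * int s^2 - int q * r^2) div d1"
  note S = setup_int[OF assms(2,3,4,5) d1_def[THEN meta_eq_to_obj_eq] N_def[THEN meta_eq_to_obj_eq] Rd_def Qd_def Cd_def]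
  have NN: "d1^2 * N = int p * int q * int s^4"
  proof -
    have "d1^2 * N = (d1*Rd)^2 + (d1*Qd)*(d1*Cd)" using S(6) by (simp add: algebra_simps power2_eq_square)
    also have "\<dots> = int p * int q * int s^4" unfolding S(2,3,4) by (simp add: algebra_simps power2_eq_square power4_eq_xxxx)
    finally show ?thesis .
  qed
  define \<kappa> where "\<kappa> = of_int Qd * \<alpha> - of_int Rd"
  note SR = setup_real[OF assms(1,2,3,7,9) S(1,2,3,5) NN, folded \<kappa>_def]
  define \<omega> where "\<omega> = \<bar>\<kappa>\<bar>"
  have kom: "\<kappa> = of_int k * \<omega>" using SR(2) \<omega>_def by simp
  have "\<kappa> \<noteq> 0" using SR(3) by auto
  then have om: "\<omega> > 0" unfolding \<omega>_def by simp
  have w: "\<omega>^2 = of_int N" using SR(1) unfolding \<omega>_def by simp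
  have Npos: "N > 0" using w om by (metis of_int_0_less_iff zero_less_power)
  have k2': "\<kappa>^2 = of_int (Rd^2 + Qd*Cd)" using SR(1) S(6) by simp
  have Qn: "Qd \<noteq> 0" using S(5) by simp
  have kk: "k*k = 1" using ks by auto
  show ?thesis
  proof (intro conjI impI allI)
    fix x1 y1 A
    assume nosol: "\<not> (\<exists>x y :: int. x^2 - N * y^2 = -1)" and f: "fund_sol N 1 x1 y1" and A: "GL2Z A"
    define G where "G = Mx Rd Qd Cd x1 y1"
    have Geq: "mat2 (- (int q * r * int s div d1) * y1 + x1) ((int q * int s^2 div d1) * y1)
                        (((int p * int s^2 - int q * r^2) div d1) * y1) ((int q * r * int s div d1) * y1 + x1) = G"
      unfolding G_def Mx_def Rd_def Qd_def Cd_def ..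
    have f': "x1 > 0" "y1 > 0" "x1^2 - N*y1^2 = 1" using f by (auto simp: fund_sol_def)
    define \<epsilon> where "\<epsilon> = of_int x1 + of_int y1 * \<omega>"
    have e1: "\<epsilon> > 1" unfolding \<epsilon>_def using f' om
      by (smt (verit) of_int_less_1_iff mult_pos_pos of_int_0_less_iff)
    have eU: "UVn N \<omega> \<epsilon> 1" unfolding UVn_def \<epsilon>_def using f' by blast
    have no_neg: "\<not> UVn N \<omega> u (-1)" for u using nosol unfolding UVn_def by blast
    have pe: "\<exists>n. u = \<epsilon> powi n" if "u > 0" "UVn N \<omega> u 1 \<or> UVn N \<omega> u (-1)" for u
    proof (rule pell_gen[OF w om e1 _ _ that])
      show "UVn N \<omega> \<epsilon> 1 \<or> UVn N \<omega> \<epsilon> (-1)" using eU by simp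
      fix v assume "v > 1" "UVn N \<omega> v 1 \<or> UVn N \<omega> v (-1)"
      then show "\<epsilon> \<le> v" using min_from_fund[OF w om Npos _ f] no_neg unfolding \<epsilon>_def by blast
    qed
    define lG where "lG = of_int x1 + of_int y1 * \<kappa>"
    have EG: "EIG \<alpha> G lG" unfolding G_def lG_def using EIG_Mx[OF \<kappa>_def k2' Qn] .
    have dG: "det G = 1" unfolding G_def det_Mx using f'(3) S(6) by simp
    have einv: "\<epsilon> * (of_int x1 - of_int y1 * \<omega>) = 1"
    proof -
      have "\<epsilon> * (of_int x1 - of_int y1 * \<omega>) = of_int x1^2 - of_int y1^2 * \<omega>^2"
        unfolding \<epsilon>_def power2_eq_square by algebra
      also have "\<dots> = of_int (x1^2 - N*y1^2)" using w by simp
      finally show ?thesis using f'(3) by simp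
    qed
    have lGe: "(k = 1 \<and> lG = \<epsilon>) \<or> (k = -1 \<and> lG = 1/\<epsilon>)"
      using ks einv e1 unfolding lG_def kom \<epsilon>_def by (auto simp: field_simps)
    have lGp: "lG > 0" using lGe e1 by auto
    have pell: "\<exists>n. u = lG powi n" if u0: "u > 0" and u1: "UVn N \<omega> u 1 \<or> UVn N \<omega> u (-1)" for u
    proof -
      obtain n where n: "u = \<epsilon> powi n" using pe[OF u0 u1] by blast
      show ?thesis
      proof (cases "k = 1")
        case True then show ?thesis using lGe n by auto
      next
        case False
        then have "lG = 1/\<epsilon>" using lGe by auto
        then have "lG powi (-n) = \<epsilon> powi n" by (simp add: power_int_minus power_int_inverse divide_inverse)
        then show ?thesis using n by metis
      qed
    qed
    show "iso_aut \<alpha> A \<longleftrightarrow> (\<exists>n::int. A = matzpow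
                  (mat2 (- (int q * r * int s div d1) * y1 + x1) ((int q * int s^2 div d1) * y1)
                        (((int p * int s^2 - int q * r^2) div d1) * y1) ((int q * r * int s div d1) * y1 + x1))
                  n)"
      unfolding Geq
      by (rule main_char[OF irr S(5) S(7) \<kappa>_def SR(1) S(6) ks kom EG _ lGp pell A]) (use dG in auto)
  next
    fix x1 y1 A
    assume f: "fund_sol N (-1) x1 y1" and A: "GL2Z A"
    define G where "G = Mx Rd Qd Cd x1 (k*y1)"
    have Geq: "mat2 (- (int q * r * int s div d1) * k * y1 + x1) ((int q * int s^2 div d1) * k * y1)
                        (((int p * int s^2 - int q * r^2) div d1) * k * y1) ((int q * r * int s div d1) * k * y1 + x1) = G"
      unfolding G_def Mx_def Rd_def Qd_def Cd_def by (simp add: mult.assoc)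
    have f': "x1 > 0" "y1 > 0" "x1^2 - N*y1^2 = -1" using f by (auto simp: fund_sol_def)
    define \<epsilon> where "\<epsilon> = of_int x1 + of_int y1 * \<omega>"
    have e1: "\<epsilon> > 1" unfolding \<epsilon>_def using f' om
      by (smt (verit) of_int_less_1_iff mult_pos_pos of_int_0_less_iff)
    have eU: "UVn N \<omega> \<epsilon> (-1)" unfolding UVn_def \<epsilon>_def using f' by blast
    have mneg: "\<epsilon> \<le> v" if "v > 1" "UVn N \<omega> v (-1)" for v
      using min_from_fund[OF w om Npos _ f] that unfolding \<epsilon>_def by blast
    have mn: "\<epsilon> \<le> v" if v: "v > 1" "UVn N \<omega> v 1 \<or> UVn N \<omega> v (-1)" for v
    proof (rule ccontr)
      assume lt: "\<not> \<epsilon> \<le> v"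
      show False
      proof (cases "UVn N \<omega> v (-1)")
        case True then show False using mneg v lt by blast
      next
        case False
        then have v1: "UVn N \<omega> v 1" using v by blast
        have "UVn N \<omega> (1/v) 1" using UVn_inv[OF w v1] by simp
        from UVn_mult[OF w eU this] have U: "UVn N \<omega> (\<epsilon> * (1/v)) (-1)" by simp
        have "\<epsilon> * (1/v) > 1" using lt v(1) by (simp add: field_simps)
        then have "\<epsilon> \<le> \<epsilon> * (1/v)" using mneg U by blast
        moreover have "\<epsilon> * (1/v) < \<epsilon>" using v(1) e1 by (simp add: field_simps)
        ultimately show False by simp
      qed
    qed
    have pell: "\<exists>n. u = \<epsilon> powi n" if "u > 0" "UVn N \<omega> u 1 \<or> UVn N \<omega> u (-1)" for u
      by (rule pell_gen[OF w om e1 _ mn that]) (use eU in auto)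
    have lGe: "of_int x1 + of_int (k*y1) * \<kappa> = \<epsilon>"
      unfolding kom \<epsilon>_def using kk by (simp add: algebra_simps) (metis mult.assoc mult.commute mult.left_commute mult_1 of_int_1 of_int_mult)
    have EG: "EIG \<alpha> G \<epsilon>" unfolding G_def using EIG_Mx[OF \<kappa>_def k2' Qn, of x1 "k*y1"] lGe by simp
    have "(k*y1)^2 = y1^2" using kk by (simp add: power_mult_distrib power2_eq_square)
    then have dG: "det G = -1" unfolding G_def det_Mx using f'(3) S(6) by simp
    show "iso_aut \<alpha> A \<longleftrightarrow> (\<exists>n::int. A = matzpow
                  (mat2 (- (int q * r * int s div d1) * k * y1 + x1) ((int q * int s^2 div d1) * k * y1)
                        (((int p * int s^2 - int q * r^2) div d1) * k * y1) ((int q * r * int s div d1) * k * y1 + x1))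
                  n)"
      unfolding Geq
      by (rule main_char[OF irr S(5) S(7) \<kappa>_def SR(1) S(6) ks kom EG _ _ pell A]) (use dG e1 in auto)
  qed
qed


end
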